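(* Let $\alpha:A^{\Delta}\to(H,V)$ be a homomorphism into a finite forest algebra with $H$ idempotent and commutative, and let $\Gamma_1,\ldots,\Gamma_r$ be the subminimal reachability classes of $(H,V)$. Then $\alpha_{\Gamma_{\mathsf{min}}}:A^{\Delta}\to(H_{\Gamma_{\mathsf{min}}},V_{\Gamma_{\mathsf{min}}})$ factors through the direct product homomorphism $\prod_{j=1}^r\alpha_{\ge\Gamma_j}:A^{\Delta}\to\prod_{j=1}^r(H_{\ge\Gamma_j},V_{\ge\Gamma_j})$. Further, each of the algebras $(H_{\ge\Gamma_j},V_{\ge\Gamma_j})$ has a unique subminimal reachability class.
   Context: $A^{\Delta}=(H_A,V_A)$ is the free forest algebra of forests and contexts over $A$. A forest algebra $(H,V)$: additive monoid $H$, monoid $V$ acting faithfully on the left, containing $g\mapsto g+h$, $g\mapsto h+g$. With $H$ idempotent and commutative, the sum $\infty$ of all elements of $H$ is absorbing. $\beta$ factors through $\gamma$ if $\gamma(s)=\gamma(s')$ implies $\beta(s)=\beta(s')$ for forests $s,s'$. The direct product homomorphism sends $s$ to the tuple $(\alpha_{\ge\Gamma_1}(s),\ldots,\alpha_{\ge\Gamma_r}(s))$. Reachability: $h\le h'$ iff $h=vh'$ for some $v\in V$; reachability classes are the classes of mutual reachability, partially ordered by $\le$. $\Gamma_{\mathsf{min}}$ is the class of $\infty$ (the least class); a class $\Gamma$ is subminimal if $\Gamma_{\mathsf{min}}<\Gamma$ with no class strictly between. A reachability ideal $I$ is a downward closed subset of $H$; the quotient $\alpha_I:A^{\Delta}\to(H/I,V/I)$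 identifies forests $s,s'$ iff $\alpha(s)=\alpha(s')\notin I$ or $\alpha(s),\alpha(s')\in I$ (so $H/I=(H\setminus I)\cup\{\infty\}$), contexts being identified when they act identically. For a class $\Gamma$: $\alpha_\Gamma$, $(H_\Gamma,V_\Gamma)$ correspond to $I=\{h:h\not>\Gamma\}$, and $\alpha_{\ge\Gamma}$, $(H_{\ge\Gamma},V_{\ge\Gamma})$ to $I=\{h:h\not\ge\Gamma\}$. *)

theory Defs
  imports "HOL-Library.FuncSet"
begin

datatype 'a tree = Node 'a "'a tree list"
type_synonym 'a forest = "'a tree list"

text \<open>A context is a forest with exactly one hole (at a leaf):
  a left forest, a tree-or-hole containing the hole, and a right forest.\<close>
datatype 'a ctx = Ctx "'a tree list" "'a ctree" "'a tree list"
     and 'a ctree = CHole | CNode 'a "'a ctx"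

fun fill :: "'a ctx \<Rightarrow> 'a forest \<Rightarrow> 'a forest"
and fillt :: "'a ctree \<Rightarrow> 'a forest \<Rightarrow> 'a forest" where
  "fill (Ctx l t r) s = l @ fillt t s @ r"
| "fillt CHole s = s"
| "fillt (CNode a c) s = [Node a (fill c s)]"

fun ctx_comp :: "'a ctx \<Rightarrow> 'a ctx \<Rightarrow> 'a ctx" where
  "ctx_comp (Ctx l CHole r) q = (case q of Ctx l' t' r' \<Rightarrow> Ctx (l @ l') t' (r' @ r))"
| "ctx_comp (Ctx l (CNode a c) r) q = Ctx l (CNode a (ctx_comp c q)) r"

definition ctx_id :: "'a ctx" where "ctx_id = Ctx [] CHole []"

definition ctx_addl :: "'a forest \<Rightarrow> 'a ctx \<Rightarrow> 'a ctx" where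
  "ctx_addl s p = (case p of Ctx l t r \<Rightarrow> Ctx (s @ l) t r)"

definition ctx_addr :: "'a ctx \<Rightarrow> 'a forest \<Rightarrow> 'a ctx" where
  "ctx_addr p s = (case p of Ctx l t r \<Rightarrow> Ctx l t (r @ s))"

section \<open>Forest algebras (V represented as a monoid of transformations of H)\<close>

definition forest_algebra :: "'h set \<Rightarrow> ('h \<Rightarrow> 'h \<Rightarrow> 'h) \<Rightarrow> 'h \<Rightarrow> ('h \<Rightarrow> 'h) set \<Rightarrow> bool" where
  "forest_algebra H pl z V \<longleftrightarrow>
     z \<in> H \<and> (\<forall>x\<in>H. \<forall>y\<in>H. pl x y \<in> H)
   \<and> (\<forall>x\<in>H. \<forall>y\<in>H. \<forall>w\<in>H. pl (pl x y) w = pl x (pl y w))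
   \<and> (\<forall>x\<in>H. pl z x = x \<and> pl x z = x)
   \<and> V \<subseteq> (H \<rightarrow>\<^sub>E H)
   \<and> restrict id H \<in> V
   \<and> (\<forall>v\<in>V. \<forall>w\<in>V. compose H v w \<in> V)
   \<and> (\<forall>h\<in>H. restrict (\<lambda>g. pl g h) H \<in> V \<and> restrict (\<lambda>g. pl h g) H \<in> V)"

definition forest_hom ::
  "('a forest \<Rightarrow> 'h) \<Rightarrow> ('a ctx \<Rightarrow> ('h \<Rightarrow> 'h)) \<Rightarrow> 'h set \<Rightarrow> ('h \<Rightarrow> 'h \<Rightarrow> 'h) \<Rightarrow> 'h \<Rightarrow> ('h \<Rightarrow> 'h) set \<Rightarrow> bool" where
  "forest_hom aH aV H pl z V \<longleftrightarrow>
     (\<forall>s. aH s \<in> H) \<and> (\<forall>p. aV p \<in> V)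
   \<and> aH [] = z \<and> (\<forall>s t. aH (s @ t) = pl (aH s) (aH t))
   \<and> aV ctx_id = restrict id H
   \<and> (\<forall>p q. aV (ctx_comp p q) = compose H (aV p) (aV q))
   \<and> (\<forall>p s. aH (fill p s) = aV p (aH s))
   \<and> (\<forall>s p. aV (ctx_addl s p) = compose H (restrict (\<lambda>g. pl (aH s) g) H) (aV p))
   \<and> (\<forall>p s. aV (ctx_addr p s) = compose H (restrict (\<lambda>g. pl g (aH s)) H) (aV p))"

definition infty :: "'h set \<Rightarrow> ('h \<Rightarrow> 'h \<Rightarrow> 'h) \<Rightarrow> 'h \<Rightarrow> 'h" where
  "infty H pl z = Finite_Set.fold pl z H"

definition reach :: "('h \<Rightarrow> 'h) set \<Rightarrow> 'h \<Rightarrow> 'h \<Rightarrow> bool" where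
  "reach V h h' \<longleftrightarrow> (\<exists>v\<in>V. h = v h')"   \<comment> \<open>h \<le> h'\<close>

definition rclass :: "'h set \<Rightarrow> ('h \<Rightarrow> 'h) set \<Rightarrow> 'h \<Rightarrow> 'h set" where
  "rclass H V h = {g \<in> H. reach V g h \<and> reach V h g}"

definition is_rclass :: "'h set \<Rightarrow> ('h \<Rightarrow> 'h) set \<Rightarrow> 'h set \<Rightarrow> bool" where
  "is_rclass H V C \<longleftrightarrow> (\<exists>h\<in>H. C = rclass H V h)"

definition class_le :: "('h \<Rightarrow> 'h) set \<Rightarrow> 'h set \<Rightarrow> 'h set \<Rightarrow> bool" where
  "class_le V C D \<longleftrightarrow> (\<exists>c\<in>C. \<exists>d\<in>D. reach V c d)"

definition class_lt :: "('h \<Rightarrow> 'h) set \<Rightarrow> 'h set \<Rightarrow> 'h set \<Rightarrow> bool" where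
  "class_lt V C D \<longleftrightarrow> class_le V C D \<and> C \<noteq> D"

definition Gmin :: "'h set \<Rightarrow> ('h \<Rightarrow> 'h \<Rightarrow> 'h) \<Rightarrow> 'h \<Rightarrow> ('h \<Rightarrow> 'h) set \<Rightarrow> 'h set" where
  "Gmin H pl z V = rclass H V (infty H pl z)"

definition subminimal :: "'h set \<Rightarrow> ('h \<Rightarrow> 'h \<Rightarrow> 'h) \<Rightarrow> 'h \<Rightarrow> ('h \<Rightarrow> 'h) set \<Rightarrow> 'h set \<Rightarrow> bool" where
  "subminimal H pl z V C \<longleftrightarrow>
     is_rclass H V C \<and> class_lt V (Gmin H pl z V) C
   \<and> \<not> (\<exists>D. is_rclass H V D \<and> class_lt V (Gmin H pl z V) D \<and> class_lt V D C)"

definition qmap :: "'h set \<Rightarrow> ('h \<Rightarrow> 'h \<Rightarrow> 'h) \<Rightarrow> 'h \<Rightarrow> 'h set \<Rightarrow> 'h \<Rightarrow> 'h" where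
  "qmap H pl z I h = (if h \<in> I then infty H pl z else h)"

definition quot_H :: "'h set \<Rightarrow> ('h \<Rightarrow> 'h \<Rightarrow> 'h) \<Rightarrow> 'h \<Rightarrow> 'h set \<Rightarrow> 'h set" where
  "quot_H H pl z I = (H - I) \<union> {infty H pl z}"

definition quot_plus :: "'h set \<Rightarrow> ('h \<Rightarrow> 'h \<Rightarrow> 'h) \<Rightarrow> 'h \<Rightarrow> 'h set \<Rightarrow> 'h \<Rightarrow> 'h \<Rightarrow> 'h" where
  "quot_plus H pl z I x y = qmap H pl z I (pl x y)"

definition quot_zero :: "'h set \<Rightarrow> ('h \<Rightarrow> 'h \<Rightarrow> 'h) \<Rightarrow> 'h \<Rightarrow> 'h set \<Rightarrow> 'h" where
  "quot_zero H pl z I = qmap H pl z I z"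

text \<open>Contexts acting identically on H/I are identified: V/I is the set of induced maps on H/I.\<close>
definition quot_V :: "'h set \<Rightarrow> ('h \<Rightarrow> 'h \<Rightarrow> 'h) \<Rightarrow> 'h \<Rightarrow> 'h set \<Rightarrow> ('h \<Rightarrow> 'h) set \<Rightarrow> ('h \<Rightarrow> 'h) set" where
  "quot_V H pl z I V = (\<lambda>v. restrict (\<lambda>h. qmap H pl z I (v h)) (quot_H H pl z I)) ` V"

definition I_gt :: "'h set \<Rightarrow> ('h \<Rightarrow> 'h) set \<Rightarrow> 'h set \<Rightarrow> 'h set" where
  "I_gt H V C = {h \<in> H. \<not> (\<exists>g\<in>C. reach V g h \<and> \<not> reach V h g)}"

definition I_ge :: "'h set \<Rightarrow> ('h \<Rightarrow> 'h) set \<Rightarrow> 'h set \<Rightarrow> 'h set" where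
  "I_ge H V C = {h \<in> H. \<not> (\<exists>g\<in>C. reach V g h)}"

definition alpha_quot :: "'h set \<Rightarrow> ('h \<Rightarrow> 'h \<Rightarrow> 'h) \<Rightarrow> 'h \<Rightarrow> 'h set \<Rightarrow> ('a forest \<Rightarrow> 'h) \<Rightarrow> 'a forest \<Rightarrow> 'h" where
  "alpha_quot H pl z I aH s = qmap H pl z I (aH s)"

definition factors_through :: "('a forest \<Rightarrow> 'b) \<Rightarrow> ('a forest \<Rightarrow> 'c) \<Rightarrow> bool" where
  "factors_through \<beta> \<gamma> \<longleftrightarrow> (\<forall>s s'. \<gamma> s = \<gamma> s' \<longrightarrow> \<beta> s = \<beta> s')"

end

theory Submission
  imports Defs
begin

lemma fold_absorb_aux:
  assumes "finite A" "A \<subseteq> S" "z \<in> S" "\<forall>x\<in>S. \<forall>y\<in>S. p x y \<in> S"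
    and "\<forall>x\<in>S. \<forall>y\<in>S. \<forall>b\<in>S. p x (p y b) = p y (p x b)"
    and "\<forall>x\<in>S. \<forall>b\<in>S. p x (p x b) = p x b"
    and "comp_fun_commute_on S g" and "\<forall>a b. g a b = (if b \<in> S then p a b else b)"
  shows "Finite_Set.fold g z A \<in> S \<and> (\<forall>a\<in>A. p a (Finite_Set.fold g z A) = Finite_Set.fold g z A)"
  using assms(1,2)
proof (induction A rule: finite_induct)
  case empty
  then show ?case using assms by simp
next
  case (insert x A)
  interpret comp_fun_commute_on S g by fact
  let ?F = "Finite_Set.fold g z A"
  have IH: "?F \<in> S" "\<forall>a\<in>A. p a ?F = ?F" using insert by auto
  have xS: "x \<in> S" using insert by auto
  have eq: "Finite_Set.fold g z (insert x A) = p x ?F"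
    using fold_insert[OF insert(4) insert(1) insert(2)] IH assms(8) by simp
  show ?case
  proof
    show "Finite_Set.fold g z (insert x A) \<in> S" using eq IH xS assms(4) by simp
    show "\<forall>a\<in>insert x A. p a (Finite_Set.fold g z (insert x A)) = Finite_Set.fold g z (insert x A)"
    proof
      fix a assume a: "a \<in> insert x A"
      show "p a (Finite_Set.fold g z (insert x A)) = Finite_Set.fold g z (insert x A)"
      proof (cases "a = x")
        case True then show ?thesis using eq assms(6) xS IH by simp
      next
        case False
        then have aA: "a \<in> A" "a \<in> S" using a insert by auto
        then show ?thesis using eq assms(5) xS IH by metis
      qed
    qed
  qed
qed

lemma fold_absorb:
  assumes "finite S" "z \<in> S" "\<forall>x\<in>S. \<forall>y\<in>S. p x y \<in> S"
    and "\<forall>x\<in>S. \<forall>y\<in>S. \<forall>b\<in>S. p x (p y b) = p y (p x b)"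
    and "\<forall>x\<in>S. \<forall>b\<in>S. p x (p x b) = p x b"
  shows "Finite_Set.fold p z S \<in> S \<and> (\<forall>a\<in>S. p a (Finite_Set.fold p z S) = Finite_Set.fold p z S)"
proof -
  define g where "g a b = (if b \<in> S then p a b else b)" for a b
  have cf: "comp_fun_commute_on S g"
  proof
    fix x y assume "x \<in> S" "y \<in> S"
    then show "g y \<circ> g x = g x \<circ> g y"
      using assms(3,4) by (auto simp: g_def fun_eq_iff)
  qed
  have "Finite_Set.fold p z S = Finite_Set.fold g z S"
    by (rule fold_closed_eq[where B=S]) (use assms in \<open>auto simp: g_def\<close>)
  then show ?thesis
    using fold_absorb_aux[OF assms(1) order_refl assms(2-5) cf] by (simp add: g_def)
qed

lemma CL:
  assumes refl: "\<forall>a\<in>K. reach W a a"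
    and trans: "\<forall>a\<in>K. \<forall>b\<in>K. \<forall>d\<in>K. reach W a b \<longrightarrow> reach W b d \<longrightarrow> reach W a d"
    and "x \<in> K" "y \<in> K"
  shows "class_le W (rclass K W x) (rclass K W y) \<longleftrightarrow> reach W x y"
proof
  assume "class_le W (rclass K W x) (rclass K W y)"
  then obtain c d where c: "c \<in> rclass K W x" and d: "d \<in> rclass K W y" and "reach W c d"
    unfolding class_le_def by auto
  then show "reach W x y" using trans assms(3,4) unfolding rclass_def by blast
next
  assume "reach W x y"
  then show "class_le W (rclass K W x) (rclass K W y)"
    unfolding class_le_def rclass_def using refl assms(3,4) by blast
qed

lemma CE:
  assumes refl: "\<forall>a\<in>K. reach W a a"
    and trans: "\<forall>a\<in>K. \<forall>b\<in>K. \<forall>d\<in>K. reach W a b \<longrightarrow> reach W b d \<longrightarrow> reach W a d"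
    and "x \<in> K" "y \<in> K"
  shows "rclass K W x = rclass K W y \<longleftrightarrow> reach W x y \<and> reach W y x"
proof
  assume "rclass K W x = rclass K W y"
  moreover have "x \<in> rclass K W x" using refl assms(3) unfolding rclass_def by blast
  ultimately show "reach W x y \<and> reach W y x" unfolding rclass_def by blast
next
  assume "reach W x y \<and> reach W y x"
  then show "rclass K W x = rclass K W y"
    unfolding rclass_def using trans assms(3,4) by blast
qed


context
  fixes H :: "'h set" and pl z and V :: "('h \<Rightarrow> 'h) set"
  assumes FA: "forest_algebra H pl z V"
begin

lemma r_in: "reach V a b \<Longrightarrow> b \<in> H \<Longrightarrow> a \<in> H"
  using FA unfolding forest_algebra_def reach_def by (auto simp: PiE_def Pi_def)

lemma r_refl: "h \<in> H \<Longrightarrow> reach V h h"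
  using FA unfolding forest_algebra_def reach_def by (metis id_apply restrict_apply')

lemma r_trans: "reach V a b \<Longrightarrow> reach V b c \<Longrightarrow> c \<in> H \<Longrightarrow> reach V a c"
  using FA unfolding forest_algebra_def reach_def by (metis comp_apply compose_def restrict_apply')

lemma r_plusr: "a \<in> H \<Longrightarrow> x \<in> H \<Longrightarrow> reach V (pl a x) a"
  using FA unfolding forest_algebra_def reach_def by (metis restrict_apply')

lemma r_plusl: "a \<in> H \<Longrightarrow> x \<in> H \<Longrightarrow> reach V (pl x a) a"
  using FA unfolding forest_algebra_def reach_def by (metis restrict_apply')

end

theorem lemma2:
  fixes aH :: "'a forest \<Rightarrow> 'h" and aV :: "'a ctx \<Rightarrow> ('h \<Rightarrow> 'h)"
    and H :: "'h set" and pl :: "'h \<Rightarrow> 'h \<Rightarrow> 'h" and z :: 'h and V :: "('h \<Rightarrow> 'h) set"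
  assumes "forest_algebra H pl z V"
    and "finite H" and "finite V"
    and "forest_hom aH aV H pl z V"
    and "\<forall>x\<in>H. pl x x = x"
    and "\<forall>x\<in>H. \<forall>y\<in>H. pl x y = pl y x"
  shows "factors_through
           (alpha_quot H pl z (I_gt H V (Gmin H pl z V)) aH)
           (\<lambda>s. \<lambda>C\<in>{C. subminimal H pl z V C}. alpha_quot H pl z (I_ge H V C) aH s)
       \<and> (\<forall>C. subminimal H pl z V C \<longrightarrow>
            (\<exists>!D. subminimal (quot_H H pl z (I_ge H V C)) (quot_plus H pl z (I_ge H V C))
                     (quot_zero H pl z (I_ge H V C)) (quot_V H pl z (I_ge H V C) V) D))"
proof -
  note FA = assms(1)
  have zH: "z \<in> H" and clo: "\<forall>x\<in>H. \<forall>y\<in>H. pl x y \<in> H"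
    and ass: "\<forall>x\<in>H. \<forall>y\<in>H. \<forall>w\<in>H. pl (pl x y) w = pl x (pl y w)"
    and VPi: "V \<subseteq> (H \<rightarrow>\<^sub>E H)" and idV: "restrict id H \<in> V"
    and addV: "\<forall>h\<in>H. restrict (\<lambda>g. pl g h) H \<in> V \<and> restrict (\<lambda>g. pl h g) H \<in> V"
    using FA unfolding forest_algebra_def by auto
  note idem = assms(5) and comm = assms(6)
  define inf where "inf = infty H pl z"
  have lc: "\<forall>x\<in>H. \<forall>y\<in>H. \<forall>b\<in>H. pl x (pl y b) = pl y (pl x b)"
    using ass comm by metis
  have li: "\<forall>x\<in>H. \<forall>b\<in>H. pl x (pl x b) = pl x b"
    using ass idem by metis
  have infH: "inf \<in> H" and infabs: "\<forall>a\<in>H. pl a inf = inf"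
    using fold_absorb[OF assms(2) zH clo lc li] unfolding inf_def infty_def by auto
  have infabs2: "\<forall>a\<in>H. pl inf a = inf" using infabs comm infH by metis
  have vH: "\<And>v h. v \<in> V \<Longrightarrow> h \<in> H \<Longrightarrow> v h \<in> H" using VPi by auto
  have rinf: "\<And>h. h \<in> H \<Longrightarrow> reach V inf h"
    using r_plusr[OF FA _ infH] infabs by metis
  have refl: "\<forall>a\<in>H. reach V a a" using r_refl[OF FA] by blast
  have trans: "\<forall>a\<in>H. \<forall>b\<in>H. \<forall>d\<in>H. reach V a b \<longrightarrow> reach V b d \<longrightarrow> reach V a d"
    using r_trans[OF FA] by blast
  have Gmin_eq: "Gmin H pl z V = rclass H V inf" unfolding Gmin_def inf_def ..
  have sub_char: "subminimal H pl z V (rclass H V c) \<longleftrightarrow>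
      \<not> reach V c inf \<and> \<not> (\<exists>y\<in>H. \<not> reach V y inf \<and> reach V y c \<and> \<not> reach V c y)" if cH: "c \<in> H" for c
    unfolding subminimal_def Gmin_eq class_lt_def is_rclass_def
    using CL[OF refl trans] CE[OF refl trans] cH infH rinf
    by (smt (verit, best) trans)
  have sub_cls: "\<exists>c\<in>H. C = rclass H V c \<and> \<not> reach V c inf" if "subminimal H pl z V C" for C
    using that sub_char unfolding subminimal_def is_rclass_def by blast
  have K: "\<exists>c\<in>H. subminimal H pl z V (rclass H V c) \<and> reach V c h"
    if hH: "h \<in> H" and hn: "\<not> reach V h inf" for h
  proof -
    define T where "T = {y\<in>H. reach V y h \<and> \<not> reach V y inf}"
    define m where "m y = card {g\<in>H. reach V g y}" for y
    have "h \<in> T" using hH hn refl unfolding T_def by auto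
    then obtain y where yT: "y \<in> T" and ymin: "\<forall>y'. y' \<in> T \<longrightarrow> m y \<le> m y'"
      using ex_has_least_nat[of "\<lambda>y. y \<in> T" h m] by blast
    have yH: "y \<in> H" and yh: "reach V y h" and yn: "\<not> reach V y inf" using yT unfolding T_def by auto
    have "\<not> (\<exists>x\<in>H. \<not> reach V x inf \<and> reach V x y \<and> \<not> reach V y x)"
    proof
      assume "\<exists>x\<in>H. \<not> reach V x inf \<and> reach V x y \<and> \<not> reach V y x"
      then obtain x where xH: "x \<in> H" and xn: "\<not> reach V x inf" and xy: "reach V x y" and yx: "\<not> reach V y x" by blast
      have "x \<in> T" using xH xn xy yh trans yH hH unfolding T_def by blast
      have sub: "{g\<in>H. reach V g x} \<subset> {g\<in>H. reach V g y}"
        using xy yx yH refl trans xH by blast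
      have "m x < m y" unfolding m_def by (rule psubset_card_mono) (use assms(2) sub in auto)
      then show False using ymin \<open>x \<in> T\<close> by fastforce
    qed
    then show ?thesis using sub_char yH yn yh by blast
  qed
  have I0_char: "h \<in> I_gt H V (Gmin H pl z V) \<longleftrightarrow> reach V h inf" if hH: "h \<in> H" for h
    unfolding I_gt_def Gmin_eq rclass_def using hH infH rinf trans by blast
  have Ige_char: "h \<in> I_ge H V (rclass H V c) \<longleftrightarrow> \<not> reach V c h" if "h \<in> H" "c \<in> H" for h c
    unfolding I_ge_def rclass_def using that refl trans by blast
  have aHH: "\<And>s. aH s \<in> H" using assms(4) unfolding forest_hom_def by auto
  have part1_aux: "qmap H pl z (I_gt H V (Gmin H pl z V)) h = qmap H pl z (I_gt H V (Gmin H pl z V)) h'"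
    if hH: "h \<in> H" and h'H: "h' \<in> H" and hn: "\<not> reach V h inf"
      and eq: "\<forall>c\<in>H. subminimal H pl z V (rclass H V c) \<longrightarrow>
          qmap H pl z (I_ge H V (rclass H V c)) h = qmap H pl z (I_ge H V (rclass H V c)) h'" for h h'
  proof -
    obtain c where cH: "c \<in> H" and cs: "subminimal H pl z V (rclass H V c)" and ch: "reach V c h"
      using K[OF hH hn] by blast
    have e: "qmap H pl z (I_ge H V (rclass H V c)) h = qmap H pl z (I_ge H V (rclass H V c)) h'"
      using eq cH cs by blast
    have "h \<notin> I_ge H V (rclass H V c)" using Ige_char[OF hH cH] ch by blast
    then have "h' = h"
      using e hn refl infH unfolding qmap_def inf_def[symmetric] by (auto split: if_splits)
    then show ?thesis by simp
  qed
  have part1: "factors_through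
           (alpha_quot H pl z (I_gt H V (Gmin H pl z V)) aH)
           (\<lambda>s. \<lambda>C\<in>{C. subminimal H pl z V C}. alpha_quot H pl z (I_ge H V C) aH s)"
    unfolding factors_through_def
  proof (intro allI impI)
    fix s s'
    assume A: "(\<lambda>C\<in>{C. subminimal H pl z V C}. alpha_quot H pl z (I_ge H V C) aH s) =
               (\<lambda>C\<in>{C. subminimal H pl z V C}. alpha_quot H pl z (I_ge H V C) aH s')"
    have eq: "\<forall>c\<in>H. subminimal H pl z V (rclass H V c) \<longrightarrow>
          qmap H pl z (I_ge H V (rclass H V c)) (aH s) = qmap H pl z (I_ge H V (rclass H V c)) (aH s')"
    proof (intro ballI impI)
      fix c assume "c \<in> H" "subminimal H pl z V (rclass H V c)"
      then show "qmap H pl z (I_ge H V (rclass H V c)) (aH s) = qmap H pl z (I_ge H V (rclass H V c)) (aH s')"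
        using fun_cong[OF A, of "rclass H V c"] unfolding alpha_quot_def by simp
    qed
    show "alpha_quot H pl z (I_gt H V (Gmin H pl z V)) aH s = alpha_quot H pl z (I_gt H V (Gmin H pl z V)) aH s'"
      unfolding alpha_quot_def
    proof (cases "reach V (aH s) inf")
      case True
      show "qmap H pl z (I_gt H V (Gmin H pl z V)) (aH s) = qmap H pl z (I_gt H V (Gmin H pl z V)) (aH s')"
      proof (cases "reach V (aH s') inf")
        case True2: True
        then show ?thesis using True I0_char aHH unfolding qmap_def by simp
      next
        case False
        show ?thesis using part1_aux[OF aHH aHH False] eq by metis
      qed
    next
      case False
      show "qmap H pl z (I_gt H V (Gmin H pl z V)) (aH s) = qmap H pl z (I_gt H V (Gmin H pl z V)) (aH s')"
        using part1_aux[OF aHH aHH False] eq by metis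
    qed
  qed
  have part2: "subminimal H pl z V C \<Longrightarrow>
            (\<exists>!D. subminimal (quot_H H pl z (I_ge H V C)) (quot_plus H pl z (I_ge H V C))
                     (quot_zero H pl z (I_ge H V C)) (quot_V H pl z (I_ge H V C) V) D)" for C
  proof -
    assume Csub: "subminimal H pl z V C"
    then obtain c where cH: "c \<in> H" and Cc: "C = rclass H V c" and cn: "\<not> reach V c inf"
      using sub_cls by blast
    define I where "I = I_ge H V C"
    define H' where "H' = quot_H H pl z I"
    define pl' where "pl' = quot_plus H pl z I"
    define z' where "z' = quot_zero H pl z I"
    define V' where "V' = quot_V H pl z I V"
    define q where "q = qmap H pl z I"
    have IH: "I \<subseteq> H" unfolding I_def I_ge_def by auto
    have Ich: "\<And>h. h \<in> H \<Longrightarrow> h \<in> I \<longleftrightarrow> \<not> reach V c h"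
      unfolding I_def Cc using Ige_char cH by blast
    have inI: "inf \<in> I" using Ich infH cn by blast
    have q_eq: "\<And>h. q h = (if h \<in> I then inf else h)" unfolding q_def qmap_def inf_def ..
    have H'ch: "\<And>x. x \<in> H' \<longleftrightarrow> x = inf \<or> (x \<in> H \<and> reach V c x)"
      unfolding H'_def quot_H_def inf_def[symmetric] using Ich IH by blast
    have H'H: "H' \<subseteq> H" by (auto simp: H'ch infH)
    have qH': "\<And>h. h \<in> H \<Longrightarrow> q h \<in> H'" using q_eq H'ch Ich by auto
    have qinf: "q inf = inf" using q_eq by simp
    have down: "\<And>a b. reach V a b \<Longrightarrow> b \<in> I \<Longrightarrow> a \<in> I"
    proof -
      fix a b assume ab: "reach V a b" and bI: "b \<in> I"
      have bH: "b \<in> H" using bI IH by blast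
      have aH: "a \<in> H" using r_in[OF FA ab bH] .
      show "a \<in> I" using Ich[OF aH] Ich[OF bH] bI ab trans cH aH bH by blast
    qed
    have KQ: "\<And>x a. x \<in> H \<Longrightarrow> a \<in> H \<Longrightarrow> q (pl x (q a)) = q (pl x a)"
    proof -
      fix x a assume xH: "x \<in> H" and aH: "a \<in> H"
      show "q (pl x (q a)) = q (pl x a)"
      proof (cases "a \<in> I")
        case True
        have "pl x a \<in> I" using down[OF r_plusl[OF FA aH xH] True] .
        then show ?thesis using True q_eq infabs xH by simp
      next
        case False then show ?thesis using q_eq by simp
      qed
    qed
    have pl'_eq: "\<And>x y. pl' x y = q (pl x y)" unfolding pl'_def quot_plus_def q_def ..
    have finH': "finite H'" using H'H assms(2) finite_subset by blast
    have z'H': "z' \<in> H'" unfolding z'_def quot_zero_def q_def[symmetric] using qH' zH by blast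
    have clo': "\<forall>x\<in>H'. \<forall>y\<in>H'. pl' x y \<in> H'"
    proof (intro ballI)
      fix x y assume "x \<in> H'" "y \<in> H'"
      then have "pl x y \<in> H" using clo H'H by blast
      then show "pl' x y \<in> H'" using pl'_eq qH' by simp
    qed
    have lc': "\<forall>x\<in>H'. \<forall>y\<in>H'. \<forall>b\<in>H'. pl' x (pl' y b) = pl' y (pl' x b)"
    proof (intro ballI)
      fix x y b assume "x \<in> H'" "y \<in> H'" "b \<in> H'"
      then have H: "x \<in> H" "y \<in> H" "b \<in> H" using H'H by auto
      have "pl' x (pl' y b) = q (pl x (pl y b))" using pl'_eq KQ H clo by simp
      also have "\<dots> = q (pl y (pl x b))" using lc H by simp
      also have "\<dots> = pl' y (pl' x b)" using pl'_eq KQ H clo by simp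
      finally show "pl' x (pl' y b) = pl' y (pl' x b)" .
    qed
    have li': "\<forall>x\<in>H'. \<forall>b\<in>H'. pl' x (pl' x b) = pl' x b"
    proof (intro ballI)
      fix x b assume "x \<in> H'" "b \<in> H'"
      then have H: "x \<in> H" "b \<in> H" using H'H by auto
      show "pl' x (pl' x b) = pl' x b" using pl'_eq KQ H clo li by simp
    qed
    define F where "F = infty H' pl' z'"
    have F: "F \<in> H'" "\<forall>a\<in>H'. pl' a F = F"
      using fold_absorb[OF finH' z'H' clo' lc' li'] unfolding F_def infty_def by auto
    have infH': "inf \<in> H'" using H'ch by simp
    have "pl' inf F = inf" using pl'_eq F(1) H'H infabs2 qinf by auto
    then have Finf: "F = inf" using F(2) infH' by metis
    have Gmin': "Gmin H' pl' z' V' = rclass H' V' inf" unfolding Gmin_def F_def[symmetric] Finf ..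
    have RQ: "reach V' g h \<longleftrightarrow> (g = inf \<or> reach V g h)" if gH': "g \<in> H'" and hH': "h \<in> H'" for g h
    proof -
      have hH: "h \<in> H" using hH' H'H by blast
      have "reach V' g h \<longleftrightarrow> (\<exists>v\<in>V. g = q (v h))"
        unfolding V'_def reach_def quot_V_def q_def[symmetric] H'_def[symmetric] using hH' by auto
      also have "\<dots> \<longleftrightarrow> (g = inf \<or> reach V g h)"
      proof
        assume "\<exists>v\<in>V. g = q (v h)"
        then obtain v where v: "v \<in> V" "g = q (v h)" by blast
        show "g = inf \<or> reach V g h"
        proof (cases "v h \<in> I")
          case True then show ?thesis using v q_eq by simp
        next
          case False then show ?thesis using v q_eq unfolding reach_def by auto
        qed
      next
        assume "g = inf \<or> reach V g h"
        then show "\<exists>v\<in>V. g = q (v h)"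
        proof
          assume g: "g = inf"
          have "restrict (\<lambda>x. pl x inf) H \<in> V" using addV infH by blast
          moreover have "q (restrict (\<lambda>x. pl x inf) H h) = inf" using hH infabs qinf by simp
          ultimately show ?thesis using g by metis
        next
          assume "reach V g h"
          then obtain v where v: "v \<in> V" "g = v h" unfolding reach_def by blast
          show ?thesis
          proof (cases "g = inf")
            case True
            have "restrict (\<lambda>x. pl x inf) H \<in> V" using addV infH by blast
            moreover have "q (restrict (\<lambda>x. pl x inf) H h) = inf" using hH infabs qinf by simp
            ultimately show ?thesis using True by metis
          next
            case False
            then have "g \<in> H" "reach V c g" using gH' H'ch by auto
            then have "q g = g" using q_eq Ich by simp
            then show ?thesis using v by metis
          qed
        qed
      qed
      finally show ?thesis .
    qed
    have refl': "\<forall>a\<in>H'. reach V' a a" using RQ refl H'H by blast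
    have trans': "\<forall>a\<in>H'. \<forall>b\<in>H'. \<forall>d\<in>H'. reach V' a b \<longrightarrow> reach V' b d \<longrightarrow> reach V' a d"
    proof (intro ballI impI)
      fix a b d assume H: "a \<in> H'" "b \<in> H'" "d \<in> H'" and ab: "reach V' a b" and bd: "reach V' b d"
      show "reach V' a d"
      proof (cases "a = inf")
        case True then show ?thesis using RQ H by blast
      next
        case False
        then have ab': "reach V a b" and ca: "reach V c a" "a \<in> H" using RQ H ab H'ch by auto
        have "b \<noteq> inf"
        proof
          assume "b = inf"
          then have "reach V c inf" using ab' ca trans cH infH by blast
          then show False using cn by blast
        qed
        then have "reach V b d" using RQ H bd by blast
        then show ?thesis using RQ H ab' trans H'H by blast
      qed
    qed
    have rinf': "\<And>h. h \<in> H' \<Longrightarrow> reach V' inf h" using RQ infH' by blast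
    have sub_char': "subminimal H' pl' z' V' (rclass H' V' x) \<longleftrightarrow>
      \<not> reach V' x inf \<and> \<not> (\<exists>y\<in>H'. \<not> reach V' y inf \<and> reach V' y x \<and> \<not> reach V' x y)" if xH: "x \<in> H'" for x
      unfolding subminimal_def Gmin' class_lt_def is_rclass_def
      using CL[OF refl' trans'] CE[OF refl' trans'] xH infH' rinf'
      by (smt (verit, best) trans')
    have ninf: "\<not> reach V' x inf \<longleftrightarrow> x \<noteq> inf" if "x \<in> H'" for x
    proof
      assume "\<not> reach V' x inf" then show "x \<noteq> inf" using RQ that infH' by blast
    next
      assume xn: "x \<noteq> inf"
      then have "reach V c x" "x \<in> H" using that H'ch by auto
      then have "\<not> reach V x inf" using cn trans cH infH by blast
      then show "\<not> reach V' x inf" using RQ that infH' xn by blast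
    qed
    have cH': "c \<in> H'" using H'ch cH refl by blast
    have cinf: "c \<noteq> inf" using cn refl infH by blast
    have ex: "subminimal H' pl' z' V' (rclass H' V' c)"
    proof -
      have "\<not> (\<exists>y\<in>H'. \<not> reach V' y inf \<and> reach V' y c \<and> \<not> reach V' c y)"
      proof
        assume "\<exists>y\<in>H'. \<not> reach V' y inf \<and> reach V' y c \<and> \<not> reach V' c y"
        then obtain y where y: "y \<in> H'" "y \<noteq> inf" "\<not> reach V' c y" using ninf by blast
        then have "reach V c y" using H'ch by blast
        then show False using y RQ cH' by blast
      qed
      then show ?thesis using sub_char'[OF cH'] ninf[OF cH'] cinf by blast
    qed
    have uniq: "D = rclass H' V' c" if D: "subminimal H' pl' z' V' D" for D
    proof -
      obtain x where xH': "x \<in> H'" and Dx: "D = rclass H' V' x"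
        using D unfolding subminimal_def is_rclass_def by blast
      have sx: "\<not> reach V' x inf" "\<not> (\<exists>y\<in>H'. \<not> reach V' y inf \<and> reach V' y x \<and> \<not> reach V' x y)"
        using sub_char'[OF xH'] D Dx by auto
      have xinf: "x \<noteq> inf" using sx(1) ninf xH' by blast
      then have "reach V c x" using H'ch xH' by blast
      then have cx: "reach V' c x" using RQ cH' xH' by blast
      have "\<not> reach V' c inf" using ninf cH' cinf by blast
      then have "reach V' x c" using sx(2) cx cH' by blast
      then show ?thesis using Dx CE[OF refl' trans' xH' cH'] cx by blast
    qed
    show ?thesis
      unfolding I_def[symmetric] H'_def[symmetric] pl'_def[symmetric] z'_def[symmetric] V'_def[symmetric]
      using ex uniq by blast
  qed
  show ?thesis using part1 part2 by blast
qed

end
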